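(* Let $p\ge1$ be an integer, $q>1$ and $\alpha\in\mathbb R$. There exists a continuous function $\rho_0:\mathrm{HT}(p,q)\to(0,\infty)$ with the following properties: $\rho_0\in\mathcal C^\infty(\mathrm{HT})$; for every vertex $v$ and every $x\in\mathbb R$, the function $y\mapsto\partial_y\rho_0(x+iy,v)$ has compact support in $(q^{\mathfrak h(v)-1},q^{\mathfrak h(v)})$; $\rho_0$ tends to infinity at infinity; and the functions $|\nabla\rho_0|=y\bigl(|\partial_x\rho_0|^2+|\partial_y\rho_0|^2\bigr)^{1/2}$ and $|\mathcal A_\alpha\rho_0|$, where $\mathcal A_\alpha=y^2(\partial_x^2+\partial_y^2)+\alpha y\partial_y$ on each open strip, are bounded on $\mathrm{HT}^o$. (That is, $\rho_0$ is a strip-adapted exhaustion function for $\mathrm{HT}(p,q)$ equipped with $\phi_e(s)=s^{-2}$, $\psi_e(s)=s^\alpha$.)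
   Context: Treebolic space. Let $T^0$ be the vertex set of the homogeneous tree in which every vertex has $p+1$ neighbours; fix an end $\omega$ and let $\mathfrak h:T^0\to\mathbb Z$ be the Busemann function with respect to $\omega$; each vertex $v$ has one neighbour $v^-$ with $\mathfrak h(v^-)=\mathfrak h(v)-1$ and $p$ neighbours $w$ with $w^-=v$. For $v$ with $k=\mathfrak h(v)$, $S_v=\{(x+iy,v):x\in\mathbb R,q^{k-1}\le y\le q^k\}$, $S_v^o$ the same with strict inequalities, $L_v=\{(x+iq^k,v)\}$. $\mathrm{HT}(p,q)$ is obtained from the disjoint union of the $S_v$ by identifying, for every $w$ with $w^-=v$, the bottom line of $S_w$ with $L_v$ pointwise; $\mathrm{HT}^o=\bigcup_vS_v^o$. Each strip carries the hyperbolic metric $y^{-2}(dx^2+dy^2)$ and $\mathrm{HT}$ the induced path metric ("tends to infinity at infinity" refers to leaving every compact set). $\mathcal C^\infty(\mathrm{HT})$: continuous $f$ such that for each $v$, $f(\cdot,v)$ has continuous partial derivatives of all orders in $S_v^o$ that are bounded on $\{(z,v)\in S_v^o:|\mathrm{Re}\,z|\le R\}$ for every $R>0$. *)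

theory Defs
  imports "HOL-Analysis.Analysis"
begin

text \<open>The homogeneous tree of degree p+1 with a fixed end omega, described by the
  predecessor map v \<mapsto> v^- (the neighbour closer to omega) and the Busemann function h.\<close>
definition homtree :: "nat \<Rightarrow> ('v \<Rightarrow> 'v) \<Rightarrow> ('v \<Rightarrow> int) \<Rightarrow> bool" where
  "homtree p pred h \<longleftrightarrow>
     (\<forall>v. h (pred v) = h v - 1) \<and>
     (\<forall>v. finite {w. pred w = v} \<and> card {w. pred w = v} = p) \<and>
     (\<forall>v w. \<exists>m n. (pred ^^ m) v = (pred ^^ n) w)"

definition strip :: "real \<Rightarrow> ('v \<Rightarrow> int) \<Rightarrow> 'v \<Rightarrow> (real \<times> real) set" where
  "strip q h v = {(x, y). q powr (real_of_int (h v) - 1) \<le> y \<and> y \<le> q powr (real_of_int (h v))}"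

definition strip_open :: "real \<Rightarrow> ('v \<Rightarrow> int) \<Rightarrow> 'v \<Rightarrow> (real \<times> real) set" where
  "strip_open q h v = {(x, y). q powr (real_of_int (h v) - 1) < y \<and> y < q powr (real_of_int (h v))}"

text \<open>HT(p,q) as a set of canonical representatives: a point of the bottom line of S_w is
  identified with the point of L_{w^-}; we represent it by its copy in S_{w^-}.\<close>
definition HT_set :: "real \<Rightarrow> ('v \<Rightarrow> int) \<Rightarrow> ((real \<times> real) \<times> 'v) set" where
  "HT_set q h = {((x, y), v). q powr (real_of_int (h v) - 1) < y \<and> y \<le> q powr (real_of_int (h v))}"

definition HT_proj :: "real \<Rightarrow> ('v \<Rightarrow> int) \<Rightarrow> ('v \<Rightarrow> 'v) \<Rightarrow> (real \<times> real) \<times> 'v \<Rightarrow> (real \<times> real) \<times> 'v" where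
  "HT_proj q h pred P = (case P of ((x, y), v) \<Rightarrow>
     if y = q powr (real_of_int (h v) - 1) then ((x, y), pred v) else ((x, y), v))"

definition HT_top :: "real \<Rightarrow> ('v \<Rightarrow> int) \<Rightarrow> ('v \<Rightarrow> 'v) \<Rightarrow> ((real \<times> real) \<times> 'v) topology" where
  "HT_top q h pred = topology (\<lambda>U. U \<subseteq> HT_set q h \<and>
     (\<forall>v. openin (top_of_set (strip q h v)) {z \<in> strip q h v. HT_proj q h pred (z, v) \<in> U}))"

definition pdx :: "(real \<times> real \<Rightarrow> real) \<Rightarrow> real \<times> real \<Rightarrow> real" where
  "pdx g P = deriv (\<lambda>t. g (t, snd P)) (fst P)"

definition pdy :: "(real \<times> real \<Rightarrow> real) \<Rightarrow> real \<times> real \<Rightarrow> real" where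
  "pdy g P = deriv (\<lambda>t. g (fst P, t)) (snd P)"

text \<open>Iterated partial derivative; True = d/dx, False = d/dy (applied right to left).\<close>
fun iter_pd :: "bool list \<Rightarrow> (real \<times> real \<Rightarrow> real) \<Rightarrow> real \<times> real \<Rightarrow> real" where
  "iter_pd [] g = g"
| "iter_pd (b # ds) g = (if b then pdx (iter_pd ds g) else pdy (iter_pd ds g))"

definition strip_smooth :: "(real \<times> real) set \<Rightarrow> (real \<times> real \<Rightarrow> real) \<Rightarrow> bool" where
  "strip_smooth U g \<longleftrightarrow> (\<forall>ds.
     continuous_on U (iter_pd ds g) \<and>
     (\<forall>x y. (x, y) \<in> U \<longrightarrow>
        (\<lambda>t. iter_pd ds g (t, y)) differentiable (at x) \<and>
        (\<lambda>t. iter_pd ds g (x, t)) differentiable (at y)) \<and>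
     (\<forall>R. bounded (iter_pd ds g ` (U \<inter> {(x, y). \<bar>x\<bar> \<le> R}))))"

end

theory Submission
  imports Defs "HOL-Computational_Algebra.Polynomial"
begin



definition sm :: "(real \<Rightarrow> real) \<Rightarrow> bool" where
  "sm f \<longleftrightarrow> (\<forall>n x. ((deriv ^^ n) f) differentiable (at x))"

lemma sm_closure:
  assumes S: "\<And>g. g \<in> S \<Longrightarrow> (\<forall>x. g differentiable (at x)) \<and> deriv g \<in> S" and f: "f \<in> S"
  shows "sm f"
proof -
  have "\<forall>g\<in>S. (deriv ^^ n) g \<in> S" for n
    by (induction n) (auto dest: S)
  then show ?thesis using f S unfolding sm_def by blast
qed

lemma sm_diff: "sm f \<Longrightarrow> f differentiable (at x)"
  unfolding sm_def by (metis funpow_0)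

lemma sm_deriv: "sm f \<Longrightarrow> sm (deriv f)"
  unfolding sm_def by (metis funpow_Suc_right comp_apply)

lemma sm_intro: "(\<And>x. f differentiable (at x)) \<Longrightarrow> sm (deriv f) \<Longrightarrow> sm f"
  unfolding sm_def by (metis funpow_Suc_right comp_apply not0_implies_Suc funpow_0)

lemma sm_DERIV: "sm f \<Longrightarrow> (f has_real_derivative deriv f x) (at x)"
  using sm_diff DERIV_deriv_iff_real_differentiable by blast

lemma sm_cont: "sm f \<Longrightarrow> isCont f x"
  using sm_diff differentiable_imp_continuous_within by blast

lemma sm_cont_on: "sm f \<Longrightarrow> continuous_on S f"
  by (simp add: continuous_at_imp_continuous_on sm_cont)

lemma sm_const: "sm (\<lambda>x. c)"
  by (rule sm_closure[where S="{\<lambda>x. c, \<lambda>x. 0}"]) auto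

lemma sm_affine:
  assumes "sm g" shows "sm (\<lambda>x. k * g (c * x + d))"
proof (rule sm_closure[where S="{f. \<exists>k g. sm g \<and> f = (\<lambda>x. k * g (c * x + d))}"])
  fix f assume "f \<in> {f. \<exists>k g. sm g \<and> f = (\<lambda>x. k * g (c * x + d))}"
  then obtain k g where g: "sm g" and f: "f = (\<lambda>x. k * g (c * x + d))" by blast
  have D: "(f has_real_derivative (k * c) * deriv g (c * x + d)) (at x)" for x
    unfolding f using sm_DERIV[OF g, of "c*x+d"]
    by (auto intro!: derivative_eq_intros DERIV_chain2[where f=g] simp: algebra_simps)
  have "deriv f = (\<lambda>x. (k * c) * deriv g (c * x + 0 + d))"
    using D by (auto intro!: DERIV_imp_deriv)
  then show "(\<forall>x. f differentiable (at x)) \<and> deriv f \<in> {f. \<exists>k g. sm g \<and> f = (\<lambda>x. k * g (c * x + d))}"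
    using D sm_deriv[OF g] by (auto simp: real_differentiable_def)
qed (use assms in auto)

inductive_set SP :: "(real \<Rightarrow> real) set" where
  SP_mult: "sm a \<Longrightarrow> sm b \<Longrightarrow> (\<lambda>x. a x * b x) \<in> SP"
| SP_add: "f \<in> SP \<Longrightarrow> g \<in> SP \<Longrightarrow> (\<lambda>x. f x + g x) \<in> SP"

lemma SP_props: "f \<in> SP \<Longrightarrow> (\<forall>x. f differentiable (at x)) \<and> deriv f \<in> SP"
proof (induction rule: SP.induct)
  case (SP_mult a b)
  have D: "((\<lambda>x. a x * b x) has_real_derivative (deriv a x * b x + a x * deriv b x)) (at x)" for x
    using sm_DERIV[OF SP_mult(1)] sm_DERIV[OF SP_mult(2)]
    by (auto intro!: derivative_eq_intros)
  hence "deriv (\<lambda>x. a x * b x) = (\<lambda>x. deriv a x * b x + a x * deriv b x)"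
    by (auto intro!: DERIV_imp_deriv)
  moreover have "(\<lambda>x. deriv a x * b x + a x * deriv b x) \<in> SP"
    by (intro SP.intros sm_deriv SP_mult)
  ultimately show ?case using D by (auto simp: real_differentiable_def)
next
  case (SP_add f g)
  have D: "((\<lambda>x. f x + g x) has_real_derivative (deriv f x + deriv g x)) (at x)" for x
    using SP_add DERIV_deriv_iff_real_differentiable
    by (auto intro!: derivative_eq_intros)
  hence "deriv (\<lambda>x. f x + g x) = (\<lambda>x. deriv f x + deriv g x)"
    by (auto intro!: DERIV_imp_deriv)
  then show ?case using D SP_add by (auto simp: real_differentiable_def intro: SP.intros)
qed

lemma sm_mult: "sm a \<Longrightarrow> sm b \<Longrightarrow> sm (\<lambda>x. a x * b x)"
  using SP_props by (intro sm_closure[where S=SP]) (auto intro: SP_mult)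

lemma sm_add: "sm a \<Longrightarrow> sm b \<Longrightarrow> sm (\<lambda>x. a x + b x)"
proof -
  assume "sm a" "sm b"
  hence "(\<lambda>x. (\<lambda>x. a x * 1) x + (\<lambda>x. b x * 1) x) \<in> SP"
    by (intro SP.intros sm_const)
  thus ?thesis using SP_props by (intro sm_closure[where S=SP]) auto
qed

lemma sm_diff2: "sm a \<Longrightarrow> sm b \<Longrightarrow> sm (\<lambda>x. a x - b x)"
  using sm_add[of a "\<lambda>x. (-1) * b (1 * x + 0)"] sm_affine[of b "-1" 1 0] by simp

lemma sm_poly: "sm (poly P)"
  by (rule sm_closure[where S="range poly"])
     (auto simp: real_differentiable_def intro!: DERIV_imp_deriv poly_DERIV image_eqI[where x="pderiv _"] ext)

lemma sm_id: "sm (\<lambda>x. x)"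
proof -
  have "poly [:0,1:] = (\<lambda>x::real. x)" by auto
  thus ?thesis using sm_poly[of "[:0,1:]"] by simp
qed

inductive_set SI :: "(real \<Rightarrow> real) \<Rightarrow> (real \<Rightarrow> real) set" for u where
  SI_base: "sm a \<Longrightarrow> (\<lambda>x. a x * inverse (u x) ^ k) \<in> SI u"
| SI_add: "f \<in> SI u \<Longrightarrow> g \<in> SI u \<Longrightarrow> (\<lambda>x. f x + g x) \<in> SI u"

lemma SI_props:
  assumes u: "sm u" and pos: "\<And>x. u x > 0"
  shows "f \<in> SI u \<Longrightarrow> (\<forall>x. f differentiable (at x)) \<and> deriv f \<in> SI u"
proof (induction rule: SI.induct)
  case (SI_base a k)
  have D: "((\<lambda>x. a x * inverse (u x) ^ k) has_real_derivative
      (deriv a x * inverse (u x) ^ k + (- real k * a x * deriv u x) * inverse (u x) ^ (k+1))) (at x)" for x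
  proof -
    have ux: "u x \<noteq> 0" using pos[of x] by simp
    have D1: "((\<lambda>x. a x * inverse (u x) ^ k) has_real_derivative
      (deriv a x * inverse (u x) ^ k + a x * (real k * inverse (u x) ^ (k - 1) * (- (inverse (u x) * deriv u x * inverse (u x)))))) (at x)"
      using sm_DERIV[OF SI_base(1)] sm_DERIV[OF u] ux
      by (auto intro!: derivative_eq_intros)
    moreover have eq: "a x * (real k * inverse (u x) ^ (k - 1) * (- (inverse (u x) * deriv u x * inverse (u x))))
       = (- real k * a x * deriv u x) * inverse (u x) ^ (k+1)"
    proof (cases k)
      case (Suc m) thus ?thesis by (simp add: field_simps power2_eq_square) (simp add: divide_simps algebra_simps)
    qed simp
    show ?thesis using D1 by (simp only: eq)
  qed
  hence "deriv (\<lambda>x. a x * inverse (u x) ^ k) =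
      (\<lambda>x. deriv a x * inverse (u x) ^ k + (- real k * a x * deriv u x) * inverse (u x) ^ (k+1))"
    by (auto intro!: DERIV_imp_deriv)
  moreover have "(\<lambda>x. deriv a x * inverse (u x) ^ k + (- real k * a x * deriv u x) * inverse (u x) ^ (k+1)) \<in> SI u"
    by (intro SI.intros sm_deriv SI_base sm_mult sm_const u)
  ultimately show ?case using D by (auto simp: real_differentiable_def)
next
  case (SI_add f g)
  have D: "((\<lambda>x. f x + g x) has_real_derivative (deriv f x + deriv g x)) (at x)" for x
    using SI_add DERIV_deriv_iff_real_differentiable
    by (auto intro!: derivative_eq_intros)
  hence "deriv (\<lambda>x. f x + g x) = (\<lambda>x. deriv f x + deriv g x)"
    by (auto intro!: DERIV_imp_deriv)
  then show ?case using D SI_add by (auto simp: real_differentiable_def intro: SI.intros)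
qed

lemma sm_div: "sm a \<Longrightarrow> sm u \<Longrightarrow> (\<And>x. u x > 0) \<Longrightarrow> sm (\<lambda>x. a x / u x)"
proof -
  assume a: "sm a" and u: "sm u" and p: "\<And>x. u x > 0"
  have "(\<lambda>x. a x * inverse (u x) ^ 1) \<in> SI u" by (rule SI_base[OF a])
  hence "sm (\<lambda>x. a x * inverse (u x) ^ 1)" using SI_props[OF u p] by (intro sm_closure[where S="SI u"]) auto
  thus ?thesis by (simp add: divide_inverse)
qed




lemma poly_exp_lim: "((\<lambda>u. poly Q u * exp (- u)) \<longlongrightarrow> (0::real)) at_top"
proof -
  have "((\<lambda>u. \<Sum>i\<le>degree Q. coeff Q i * (u ^ i / exp u)) \<longlongrightarrow> (0::real)) at_top"
    by (intro tendsto_null_sum tendsto_mult_right_zero tendsto_power_div_exp_0)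
  moreover have "(\<Sum>i\<le>degree Q. coeff Q i * (u ^ i / exp u)) = poly Q u * exp (- u)" for u :: real
    unfolding poly_altdef exp_minus by (simp add: sum_distrib_right divide_inverse mult.assoc)
  ultimately show ?thesis by simp
qed

lemma poly_exp_lim0: "((\<lambda>t. poly Q (inverse t) * exp (- inverse t)) \<longlongrightarrow> (0::real)) (at_right 0)"
  using filterlim_compose[OF poly_exp_lim filterlim_inverse_at_top_right] by (simp add: o_def)

definition EF :: "real poly \<Rightarrow> real \<Rightarrow> real" where
  "EF P t = (if t \<le> 0 then 0 else poly P (inverse t) * exp (- inverse t))"

definition EPn :: "real poly \<Rightarrow> real poly" where
  "EPn P = [:0,0,1:] * (P - pderiv P)"

lemma EF_deriv: "(EF P has_real_derivative EF (EPn P) t) (at t)"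
proof -
  consider "t < 0" | "t = 0" | "t > 0" by linarith
  then show ?thesis
  proof cases
    case 1
    have "((\<lambda>x. 0) has_real_derivative 0) (at t)" by simp
    have e: "EF (EPn P) t = 0" using 1 by (simp add: EF_def)
    have "(EF P has_real_derivative 0) (at t)"
      by (rule has_field_derivative_transform_within_open[OF \<open>((\<lambda>x. 0) has_real_derivative 0) (at t)\<close>, where S="{..<0}"]) (use 1 in \<open>auto simp: EF_def\<close>)
    then show ?thesis using e by simp
  next
    case 2
    have l: "((\<lambda>y. (EF P y - EF P 0) / (y - 0)) \<longlongrightarrow> 0) (at_left 0)"
    proof (rule tendsto_eventually)
      show "\<forall>\<^sub>F y in at_left 0. (EF P y - EF P 0) / (y - 0) = 0"
        by (auto simp: eventually_at_left_field EF_def intro!: exI[of _ "-1"])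
    qed
    have r: "((\<lambda>y. (EF P y - EF P 0) / (y - 0)) \<longlongrightarrow> 0) (at_right 0)"
    proof -
      have "\<forall>\<^sub>F y in at_right 0. poly ([:0,1:] * P) (inverse y) * exp (- inverse y) = (EF P y - EF P 0) / (y - 0)"
        by (auto simp: eventually_at_right_field EF_def divide_inverse intro!: exI[of _ 1])
      thus ?thesis by (intro Lim_transform_eventually[OF poly_exp_lim0[of "[:0,1:] * P"]])
    qed
    have "EF (EPn P) 0 = 0" by (simp add: EF_def)
    then show ?thesis using 2 filterlim_split_at[OF l r] by (simp add: has_field_derivative_iff)
  next
    case 3
    have "((\<lambda>x. poly P (inverse x) * exp (- inverse x)) has_real_derivative
        poly (pderiv P) (inverse t) * (- (inverse t * inverse t)) * exp (- inverse t) +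
        poly P (inverse t) * (exp (- inverse t) * (inverse t * inverse t))) (at t)"
      using 3 by (auto intro!: derivative_eq_intros simp: poly_DERIV)
    moreover have "poly (pderiv P) (inverse t) * (- (inverse t * inverse t)) * exp (- inverse t) +
        poly P (inverse t) * (exp (- inverse t) * (inverse t * inverse t)) = EF (EPn P) t"
      using 3 by (simp add: EF_def EPn_def algebra_simps power2_eq_square)
    ultimately have "((\<lambda>x. poly P (inverse x) * exp (- inverse x)) has_real_derivative EF (EPn P) t) (at t)"
      by simp
    then show ?thesis
      by (rule has_field_derivative_transform_within_open[where S="{0<..}"]) (use 3 in \<open>auto simp: EF_def\<close>)
  qed
qed

lemma sm_EF: "sm (EF P)"
proof (rule sm_closure[where S="range EF"])
  fix g assume "g \<in> range EF"
  then obtain Q where g: "g = EF Q" by auto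
  have "deriv g = EF (EPn Q)" unfolding g using EF_deriv by (auto intro!: ext DERIV_imp_deriv)
  thus "(\<forall>x. g differentiable (at x)) \<and> deriv g \<in> range EF"
    using EF_deriv g by (auto simp: real_differentiable_def)
qed auto

definition f0 :: "real \<Rightarrow> real" where "f0 = EF 1"

lemma sm_f0: "sm f0" unfolding f0_def by (rule sm_EF)
lemma f0_nonpos: "t \<le> 0 \<Longrightarrow> f0 t = 0" by (simp add: f0_def EF_def)
lemma f0_pos: "t > 0 \<Longrightarrow> f0 t > 0" by (simp add: f0_def EF_def)
lemma f0_nonneg: "f0 t \<ge> 0" by (simp add: f0_def EF_def)




lemma deriv_loc_const:
  fixes g :: "real \<Rightarrow> real" and c :: real
  assumes "open S" "t \<in> S" "\<And>x. x \<in> S \<Longrightarrow> g x = c"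
  shows "deriv g t = 0"
proof -
  have "((\<lambda>x. c) has_real_derivative 0) (at t)" by simp
  hence "(g has_real_derivative 0) (at t)"
    by (rule has_field_derivative_transform_within_open[where S=S]) (use assms in auto)
  thus ?thesis by (rule DERIV_imp_deriv)
qed

lemma bounded_supp:
  fixes \<phi> :: "real \<Rightarrow> real"
  assumes "\<And>t. isCont \<phi> t" "\<And>t. t < a \<or> b < t \<Longrightarrow> \<phi> t = 0"
  shows "\<exists>K. \<forall>t. \<bar>\<phi> t\<bar> \<le> K"
proof -
  have "compact (\<phi> ` {a..b})"
    by (intro compact_continuous_image continuous_at_imp_continuous_on) (use assms in auto)
  then obtain K where K: "\<forall>y\<in>\<phi> ` {a..b}. norm y \<le> K" using compact_imp_bounded bounded_iff by metis
  have "\<bar>\<phi> t\<bar> \<le> max K 0" for t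
  proof (cases "t < a \<or> b < t")
    case True thus ?thesis using assms(2)[of t] by simp
  next
    case False hence "t \<in> {a..b}" by auto
    hence "\<bar>\<phi> t\<bar> \<le> K" using K by auto
    thus ?thesis by linarith
  qed
  thus ?thesis by blast
qed

definition chi0 :: "real \<Rightarrow> real" where
  "chi0 t = f0 t / (f0 t + f0 (1 - t))"

lemma chi0_den_pos: "f0 t + f0 (1 - t) > 0"
proof (cases "t > 0")
  case True thus ?thesis using f0_pos[of t] f0_nonneg[of "1-t"] by simp
next
  case False thus ?thesis using f0_pos[of "1-t"] f0_nonneg[of t] by simp
qed

lemma sm_chi0: "sm chi0"
proof -
  have a: "sm (\<lambda>t. f0 t + 1 * f0 ((-1) * t + 1))"
    by (intro sm_add sm_f0 sm_affine)
  have "sm (\<lambda>t. f0 t / (f0 t + 1 * f0 ((-1) * t + 1)))"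
    by (rule sm_div[OF sm_f0 a]) (use chi0_den_pos in simp)
  thus ?thesis unfolding chi0_def by simp
qed

lemma chi0_range: "0 \<le> chi0 t \<and> chi0 t \<le> 1"
  using chi0_den_pos[of t] f0_nonneg[of t] f0_nonneg[of "1-t"]
  by (auto simp: chi0_def divide_le_eq_1)

lemma chi0_lo: "t \<le> 0 \<Longrightarrow> chi0 t = 0" by (simp add: chi0_def f0_nonpos)
lemma chi0_hi: "t \<ge> 1 \<Longrightarrow> chi0 t = 1"
  using chi0_den_pos[of t] by (simp add: chi0_def f0_nonpos)

locale step =
  fixes g :: "real \<Rightarrow> real" and t0 t1 :: real
  assumes sm: "sm g" and rng: "\<And>t. 0 \<le> g t \<and> g t \<le> 1"
    and lo: "\<And>t. t \<le> t0 \<Longrightarrow> g t = 0" and hi: "\<And>t. t \<ge> t1 \<Longrightarrow> g t = 1"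
begin

lemma d_zero: "t < t0 \<or> t1 < t \<Longrightarrow> deriv g t = 0"
proof (elim disjE)
  assume "t < t0" thus ?thesis by (intro deriv_loc_const[where S="{..<t0}" and c=0]) (auto simp: lo)
next
  assume "t1 < t" thus ?thesis by (intro deriv_loc_const[where S="{t1<..}" and c=1]) (auto simp: hi)
qed

lemma dd_zero: "t < t0 \<or> t1 < t \<Longrightarrow> deriv (deriv g) t = 0"
proof (elim disjE)
  assume a: "t < t0" show ?thesis by (rule deriv_loc_const[where S="{..<t0}" and c=0]) (use a in \<open>auto intro: d_zero\<close>)
next
  assume a: "t1 < t" show ?thesis by (rule deriv_loc_const[where S="{t1<..}" and c=0]) (use a in \<open>auto intro: d_zero\<close>)
qed

lemma d_bound: "\<exists>K. \<forall>t. \<bar>deriv g t\<bar> \<le> K"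
  by (rule bounded_supp[OF sm_cont[OF sm_deriv[OF sm]] d_zero])

lemma dd_bound: "\<exists>K. \<forall>t. \<bar>deriv (deriv g) t\<bar> \<le> K"
  by (rule bounded_supp[OF sm_cont[OF sm_deriv[OF sm_deriv[OF sm]]] dd_zero])

end

lemma step_chi:
  assumes "q > 1"
  shows "step (\<lambda>t. chi0 ((3 / (q - 1)) * t + (- 3 / (q - 1) - 1))) (1 + (q - 1) / 3) (1 + 2 * (q - 1) / 3)"
proof
  show "sm (\<lambda>t. chi0 (3 / (q - 1) * t + (- 3 / (q - 1) - 1)))"
    using sm_affine[OF sm_chi0, of 1 "3 / (q - 1)" "- 3 / (q - 1) - 1"] by (simp only: mult_1)
  show "0 \<le> chi0 (3 / (q - 1) * t + (- 3 / (q - 1) - 1)) \<and> chi0 (3 / (q - 1) * t + (- 3 / (q - 1) - 1)) \<le> 1" for t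
    by (rule chi0_range)
  fix t
  have e: "3 / (q - 1) * t + (- 3 / (q - 1) - 1) = 3 * (t - 1) / (q - 1) - 1"
    using assms by (simp add: right_diff_distrib diff_divide_distrib)
  show "t \<le> 1 + (q - 1) / 3 \<Longrightarrow> chi0 (3 / (q - 1) * t + (- 3 / (q - 1) - 1)) = 0"
    using assms unfolding e by (intro chi0_lo) (simp add: field_simps)
  show "1 + 2 * (q - 1) / 3 \<le> t \<Longrightarrow> chi0 (3 / (q - 1) * t + (- 3 / (q - 1) - 1)) = 1"
    using assms unfolding e by (intro chi0_hi) (simp add: field_simps)
qed

definition H :: "real \<Rightarrow> real" where "H t = ln (1 + t\<^sup>2)"

lemma H_D1: "(H has_real_derivative 2 * t / (1 + t\<^sup>2)) (at t)"
proof -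
  have p: "1 + t\<^sup>2 > 0" by (simp add: add_pos_nonneg)
  show ?thesis unfolding H_def using p
    by (auto intro!: derivative_eq_intros simp: field_simps power2_eq_square)
qed

lemma deriv_H: "deriv H = (\<lambda>t. 2 * t / (1 + t\<^sup>2))"
  using H_D1 by (auto intro!: ext DERIV_imp_deriv)

lemma H_D2: "(deriv H has_real_derivative (2 - 2 * t\<^sup>2) / (1 + t\<^sup>2)\<^sup>2) (at t)"
proof -
  have p: "1 + t\<^sup>2 \<noteq> 0" by (metis add_pos_nonneg less_irrefl zero_le_power2 zero_less_one)
  show ?thesis unfolding deriv_H using p
    by (auto intro!: derivative_eq_intros simp: field_simps power2_eq_square)
qed

lemma deriv2_H: "deriv (deriv H) t = (2 - 2 * t\<^sup>2) / (1 + t\<^sup>2)\<^sup>2"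
  using H_D2 by (rule DERIV_imp_deriv)

lemma sm_H: "sm H"
proof (rule sm_intro)
  show "H differentiable (at x)" for x using H_D1 by (auto simp: real_differentiable_def)
  have "sm (\<lambda>t. poly [:0,2:] t / poly [:1,0,1:] t)"
    by (rule sm_div[OF sm_poly sm_poly]) (simp add: add_pos_nonneg)
  moreover have "(\<lambda>t. poly [:0,2:] t / poly [:1,0,1:] t) = deriv H"
    unfolding deriv_H by (auto simp: power2_eq_square)
  ultimately show "sm (deriv H)" by simp
qed

lemma two_abs_le: "\<bar>2 * t\<bar> \<le> 1 + t\<^sup>2" for t :: real
proof -
  have "0 \<le> (\<bar>t\<bar> - 1)\<^sup>2" by simp
  hence "0 \<le> t\<^sup>2 - 2 * \<bar>t\<bar> + 1" by (simp add: power2_diff power2_abs)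
  thus ?thesis by (simp add: abs_mult)
qed

lemma H_d1_bound: "\<bar>deriv H t\<bar> \<le> 1"
proof -
  have p: "1 + t\<^sup>2 > 0" by (simp add: add_pos_nonneg)
  have "\<bar>2 * t\<bar> \<le> 1 + t\<^sup>2" by (rule two_abs_le)
  thus ?thesis using p unfolding deriv_H by (simp add: abs_div divide_le_eq_1)
qed

lemma H_d2_bound: "\<bar>deriv (deriv H) t\<bar> \<le> 2"
proof -
  have p: "1 + t\<^sup>2 \<ge> 1" by simp
  have "\<bar>2 - 2 * t\<^sup>2\<bar> \<le> 2 * (1 + t\<^sup>2)" using zero_le_power2[of t] by (simp add: abs_le_iff)
  also have "\<dots> \<le> 2 * (1 + t\<^sup>2)\<^sup>2"
  proof -
    have "(1 + t\<^sup>2) * 1 \<le> (1 + t\<^sup>2) * (1 + t\<^sup>2)" using p by (intro mult_left_mono) auto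
    thus ?thesis by (simp add: power2_eq_square)
  qed
  finally show ?thesis unfolding deriv2_H using p by (simp add: abs_div divide_le_eq)
qed

lemma H_nonneg: "H t \<ge> 0" by (simp add: H_def)

lemma H_mono: "\<bar>s\<bar> \<le> \<bar>t\<bar> \<Longrightarrow> H s \<le> H t"
  unfolding H_def by (simp add: abs_le_square_iff add_pos_nonneg)

lemma H_scale:
  assumes "q \<ge> 1"
  shows "0 \<le> H t - H (t / q) \<and> H t - H (t / q) \<le> 2 * ln q"
proof
  have "\<bar>t\<bar> * 1 \<le> \<bar>t\<bar> * q" using assms by (intro mult_left_mono) auto
  hence "\<bar>t / q\<bar> \<le> \<bar>t\<bar>" using assms by (simp add: abs_div pos_divide_le_eq)
  thus "0 \<le> H t - H (t / q)" using H_mono by simp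
next
  have q0: "q > 0" using assms by simp
  have a: "1 + (t/q)\<^sup>2 > 0" by (simp add: add_pos_nonneg)
  have e: "q\<^sup>2 * (1 + (t/q)\<^sup>2) = q\<^sup>2 + t\<^sup>2" using q0 by (simp add: field_simps power2_eq_square)
  have "1 \<le> q\<^sup>2" using assms by (simp add: one_le_power)
  hence "1 + t\<^sup>2 \<le> q\<^sup>2 * (1 + (t/q)\<^sup>2)" unfolding e by simp
  moreover have "1 + t\<^sup>2 > 0" by (simp add: add_pos_nonneg)
  ultimately have "ln (1 + t\<^sup>2) \<le> ln (q\<^sup>2 * (1 + (t/q)\<^sup>2))" by (subst ln_le_cancel_iff) auto
  also have "\<dots> = 2 * ln q + ln (1 + (t/q)\<^sup>2)" using q0 a by (simp add: ln_mult ln_realpow)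
  finally show "H t - H (t / q) \<le> 2 * ln q" by (simp add: H_def)
qed

lemma H_large: "H t < M \<Longrightarrow> \<bar>t\<bar> < exp M"
proof -
  assume "H t < M"
  hence "1 + t\<^sup>2 < exp M" unfolding H_def by (simp add: add_pos_nonneg ln_less_cancel_iff[symmetric])
  moreover have "\<bar>t\<bar> \<le> 1 + t\<^sup>2" using two_abs_le[of t] by (simp add: abs_mult)
  ultimately show ?thesis by linarith
qed




inductive_set W :: "(real \<times> real \<Rightarrow> real) set" where
  W_prod: "sm a \<Longrightarrow> sm b \<Longrightarrow> (\<lambda>z. a (fst z) * b (snd z)) \<in> W"
| W_add: "f \<in> W \<Longrightarrow> g \<in> W \<Longrightarrow> (\<lambda>z. f z + g z) \<in> W"

lemma W_props:
  "f \<in> W \<Longrightarrow> continuous_on UNIV f \<and>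
     (\<forall>x y. (\<lambda>t. f (t, y)) differentiable (at x) \<and> (\<lambda>t. f (x, t)) differentiable (at y)) \<and>
     pdx f \<in> W \<and> pdy f \<in> W"
proof (induction rule: W.induct)
  case (W_prod a b)
  have c: "continuous_on UNIV (\<lambda>z. a (fst z) * b (snd z))"
    by (intro continuous_on_mult continuous_on_compose2[OF sm_cont_on[OF W_prod(1)]]
        continuous_on_compose2[OF sm_cont_on[OF W_prod(2)]] continuous_intros) auto
  have dx: "((\<lambda>t. a t * b y) has_real_derivative deriv a x * b y) (at x)" for x y
    using sm_DERIV[OF W_prod(1)] by (auto intro!: derivative_eq_intros)
  have dy: "((\<lambda>t. a x * b t) has_real_derivative a x * deriv b y) (at y)" for x y
    using sm_DERIV[OF W_prod(2)] by (auto intro!: derivative_eq_intros)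
  have "pdx (\<lambda>z. a (fst z) * b (snd z)) = (\<lambda>z. deriv a (fst z) * b (snd z))"
    unfolding pdx_def using dx by (auto intro!: ext DERIV_imp_deriv)
  moreover have "pdy (\<lambda>z. a (fst z) * b (snd z)) = (\<lambda>z. (\<lambda>x. a x) (fst z) * deriv b (snd z))"
    unfolding pdy_def using dy by (auto intro!: ext DERIV_imp_deriv)
  moreover have "\<forall>x y. (\<lambda>t. a t * b y) differentiable (at x) \<and> (\<lambda>t. a x * b t) differentiable (at y)"
    using dx dy unfolding real_differentiable_def by blast
  moreover have "(\<lambda>z. deriv a (fst z) * b (snd z)) \<in> W" by (rule W.W_prod[OF sm_deriv[OF W_prod(1)] W_prod(2)])
  moreover have "(\<lambda>z. a (fst z) * deriv b (snd z)) \<in> W" by (rule W.W_prod[OF W_prod(1) sm_deriv[OF W_prod(2)]])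
  ultimately show ?case using c by simp
next
  case (W_add f g)
  have dx: "((\<lambda>t. f (t, y) + g (t, y)) has_real_derivative deriv (\<lambda>t. f (t, y)) x + deriv (\<lambda>t. g (t, y)) x) (at x)" for x y
    using W_add DERIV_deriv_iff_real_differentiable by (auto intro!: derivative_eq_intros)
  have dy: "((\<lambda>t. f (x, t) + g (x, t)) has_real_derivative deriv (\<lambda>t. f (x, t)) y + deriv (\<lambda>t. g (x, t)) y) (at y)" for x y
    using W_add DERIV_deriv_iff_real_differentiable by (auto intro!: derivative_eq_intros)
  have "pdx (\<lambda>z. f z + g z) = (\<lambda>z. pdx f z + pdx g z)"
    unfolding pdx_def using dx by (auto intro!: ext DERIV_imp_deriv)
  moreover have "pdy (\<lambda>z. f z + g z) = (\<lambda>z. pdy f z + pdy g z)"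
    unfolding pdy_def using dy by (auto intro!: ext DERIV_imp_deriv)
  moreover have "\<forall>x y. (\<lambda>t. f (t, y) + g (t, y)) differentiable (at x) \<and> (\<lambda>t. f (x, t) + g (x, t)) differentiable (at y)"
    using dx dy unfolding real_differentiable_def by blast
  moreover have "(\<lambda>z. pdx f z + pdx g z) \<in> W" using W_add.IH by (intro W.W_add) auto
  moreover have "(\<lambda>z. pdy f z + pdy g z) \<in> W" using W_add.IH by (intro W.W_add) auto
  moreover have "continuous_on UNIV (\<lambda>z. f z + g z)" using W_add.IH by (intro continuous_on_add) auto
  ultimately show ?case by simp
qed

lemma iter_W: "f \<in> W \<Longrightarrow> iter_pd ds f \<in> W"
proof (induction ds)
  case (Cons b ds)
  thus ?case using W_props[OF Cons.IH[OF Cons.prems]] by simp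
qed simp

lemma strip_smooth_W:
  assumes "f \<in> W" and bd: "\<And>R. bounded (U \<inter> {(x, y). \<bar>x\<bar> \<le> R})"
  shows "strip_smooth U f"
  unfolding strip_smooth_def
proof (intro allI)
  fix ds
  have g: "iter_pd ds f \<in> W" by (rule iter_W[OF assms(1)])
  have P1: "continuous_on UNIV (iter_pd ds f)" using W_props[OF g] by (rule conjunct1)
  have P2: "\<forall>x y. (\<lambda>t. iter_pd ds f (t, y)) differentiable (at x) \<and> (\<lambda>t. iter_pd ds f (x, t)) differentiable (at y)"
    using W_props[OF g] by (rule conjunct2[THEN conjunct1])
  have 1: "continuous_on U (iter_pd ds f)" by (rule continuous_on_subset[OF P1]) simp
  have 3: "bounded (iter_pd ds f ` (U \<inter> {(x, y). \<bar>x\<bar> \<le> R}))" for R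
  proof -
    define B where "B = U \<inter> {(x, y). \<bar>x\<bar> \<le> R}"
    have "compact (closure B)" unfolding B_def using bd[of R] by (rule compact_closure[THEN iffD2])
    hence "compact (iter_pd ds f ` closure B)"
      by (rule compact_continuous_image[OF continuous_on_subset[OF P1], rotated]) simp
    hence "bounded (iter_pd ds f ` closure B)" by (rule compact_imp_bounded)
    moreover have "iter_pd ds f ` B \<subseteq> iter_pd ds f ` closure B" using closure_subset by (rule image_mono)
    ultimately show ?thesis unfolding B_def by (rule bounded_subset)
  qed
  show "continuous_on U (iter_pd ds f) \<and>
     (\<forall>x y. (x, y) \<in> U \<longrightarrow> (\<lambda>t. iter_pd ds f (t, y)) differentiable at x \<and> (\<lambda>t. iter_pd ds f (x, t)) differentiable at y) \<and>
     (\<forall>R. bounded (iter_pd ds f ` (U \<inter> {(x, y). \<bar>x\<bar> \<le> R})))"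
    using 1 P2 3 by simp
qed

lemma pdx_form:
  assumes "sm A" "sm D"
  shows "pdx (\<lambda>z. A (fst z) + D (fst z) * X (snd z)) = (\<lambda>z. deriv A (fst z) + deriv D (fst z) * X (snd z))"
proof -
  have "((\<lambda>t. A t + D t * X y) has_real_derivative deriv A x + deriv D x * X y) (at x)" for x y
    using sm_DERIV[OF assms(1)] sm_DERIV[OF assms(2)] by (auto intro!: derivative_eq_intros)
  thus ?thesis unfolding pdx_def by (auto intro!: ext DERIV_imp_deriv)
qed

lemma pdy_form:
  assumes "sm X"
  shows "pdy (\<lambda>z. A (fst z) + D (fst z) * X (snd z)) = (\<lambda>z. D (fst z) * deriv X (snd z))"
proof -
  have "((\<lambda>t. A x + D x * X t) has_real_derivative D x * deriv X y) (at y)" for x y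
    using sm_DERIV[OF assms(1)] by (auto intro!: derivative_eq_intros)
  thus ?thesis unfolding pdy_def by (auto intro!: ext DERIV_imp_deriv)
qed

lemma pdy_form2:
  assumes "sm X"
  shows "pdy (\<lambda>z. D (fst z) * X (snd z)) = (\<lambda>z. D (fst z) * deriv X (snd z))"
  using pdy_form[OF assms, of "\<lambda>_. 0" D] by simp

lemma sm_scale: "sm g \<Longrightarrow> sm (\<lambda>x. g (x / c))"
  using sm_affine[of g 1 "1/c" 0] by simp

lemma deriv_scale: "sm g \<Longrightarrow> deriv (\<lambda>x. g (x / c)) = (\<lambda>x. deriv g (x / c) / c)"
proof -
  assume g: "sm g"
  have "((\<lambda>x. g (x / c)) has_real_derivative deriv g (x / c) / c) (at x)" for x
    using sm_DERIV[OF g, of "x/c"] by (auto intro!: derivative_eq_intros DERIV_chain2[where f=g] simp: divide_inverse)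
  thus ?thesis by (auto intro!: ext DERIV_imp_deriv)
qed

lemma deriv2_scale: "sm g \<Longrightarrow> deriv (deriv (\<lambda>x. g (x / c))) = (\<lambda>x. deriv (deriv g) (x / c) / c / c)"
proof -
  assume g: "sm g"
  have "deriv (\<lambda>x. deriv g (x / c) / c) = (\<lambda>x. deriv (\<lambda>x. deriv g (x / c)) x / c)"
  proof -
    have "((\<lambda>x. deriv g (x / c) / c) has_real_derivative deriv (\<lambda>x. deriv g (x / c)) x / c) (at x)" for x
      by (rule DERIV_cdivide[OF sm_DERIV[OF sm_scale[OF sm_deriv[OF g], of c], of x]])
    thus ?thesis by (auto intro!: ext DERIV_imp_deriv)
  qed
  thus ?thesis using deriv_scale[OF g] deriv_scale[OF sm_deriv[OF g]] by simp
qed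




lemma AB1:
  fixes a b M chi E S Y Q :: real
  assumes "\<bar>a\<bar> \<le> M" "\<bar>b\<bar> \<le> M" "0 \<le> chi" "chi \<le> 1" "E \<ge> 1" "S > 0" "0 \<le> Y" "Y \<le> Q * S"
  shows "\<bar>Y * (a / S + (b / (S * E) - a / S) * chi)\<bar> \<le> Q * M"
proof -
  have M0: "M \<ge> 0" using assms(1) by linarith
  have e: "Y * (a / S + (b / (S * E) - a / S) * chi) = (Y / S) * (a * (1 - chi) + (b / E) * chi)"
    using assms(5,6) by (simp add: field_simps)
  have bE: "\<bar>b / E\<bar> \<le> M"
  proof -
    have "\<bar>b / E\<bar> = \<bar>b\<bar> / E" using assms(5) by simp
    also have "\<dots> \<le> \<bar>b\<bar>"
    proof -
      have "\<bar>b\<bar> * 1 \<le> \<bar>b\<bar> * E" using assms(5) by (intro mult_left_mono) auto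
      thus ?thesis using assms(5) by (simp add: pos_divide_le_eq)
    qed
    finally show ?thesis using assms(2) by linarith
  qed
  have "\<bar>a * (1 - chi) + (b / E) * chi\<bar> \<le> \<bar>a\<bar> * (1 - chi) + \<bar>b / E\<bar> * chi"
  proof -
    have "\<bar>a * (1 - chi) + (b / E) * chi\<bar> \<le> \<bar>a * (1 - chi)\<bar> + \<bar>(b / E) * chi\<bar>" by (rule abs_triangle_ineq)
    also have "\<dots> = \<bar>a\<bar> * (1 - chi) + \<bar>b / E\<bar> * chi" using assms(3,4) by (simp add: abs_mult)
    finally show ?thesis .
  qed
  also have "\<dots> \<le> M * (1 - chi) + M * chi"
    using assms(1,3,4) bE by (intro add_mono mult_right_mono) auto
  finally have c: "\<bar>a * (1 - chi) + (b / E) * chi\<bar> \<le> M" by (simp add: algebra_simps)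
  have ys: "0 \<le> Y / S" "Y / S \<le> Q" using assms(6,7,8) by (auto simp: divide_le_eq mult.commute)
  have "\<bar>(Y / S) * (a * (1 - chi) + (b / E) * chi)\<bar> = (Y / S) * \<bar>a * (1 - chi) + (b / E) * chi\<bar>"
    using ys assms(6,7) by (simp add: abs_mult)
  also have "\<dots> \<le> Q * M" using ys c M0 by (intro mult_mono) auto
  finally show ?thesis unfolding e .
qed

lemma AB2:
  fixes d c E K S Y Q :: real
  assumes "\<bar>d\<bar> \<le> E" "\<bar>c\<bar> \<le> K" "S > 0" "0 \<le> Y" "Y \<le> Q * S"
  shows "\<bar>Y * (d * (c / S))\<bar> \<le> Q * (E * K)"
proof -
  have ys: "0 \<le> Y / S" "Y / S \<le> Q" using assms(3,4,5) by (auto simp: divide_le_eq mult.commute)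
  have "\<bar>Y * (d * (c / S))\<bar> = (Y / S) * (\<bar>d\<bar> * \<bar>c\<bar>)" using ys assms(3,4) by (simp add: abs_mult)
  also have "\<dots> \<le> Q * (E * K)" using ys assms(1,2) by (intro mult_mono) auto
  finally show ?thesis .
qed

lemma abs3: "\<bar>a + b + c\<bar> \<le> \<bar>a\<bar> + \<bar>b\<bar> + \<bar>c\<bar>" for a b c :: real by arith

lemma sqrt_le_abs: "sqrt (a\<^sup>2 + b\<^sup>2) \<le> \<bar>a\<bar> + \<bar>b\<bar>" for a b :: real
proof -
  have "a\<^sup>2 + b\<^sup>2 \<le> (\<bar>a\<bar> + \<bar>b\<bar>)\<^sup>2" by (simp add: power2_sum)
  hence "sqrt (a\<^sup>2 + b\<^sup>2) \<le> sqrt ((\<bar>a\<bar> + \<bar>b\<bar>)\<^sup>2)" by (rule real_sqrt_le_mono)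
  thus ?thesis by simp
qed




locale ht =
  fixes p :: nat and q :: real and pred :: "'v \<Rightarrow> 'v" and h :: "'v \<Rightarrow> int"
  assumes p1: "p \<ge> 1" and q1: "q > 1" and tree: "homtree p pred h"
begin

lemma hpred: "h (pred v) = h v - 1" using tree unfolding homtree_def by blast
lemma children_fin: "finite {w. pred w = v}" using tree unfolding homtree_def by blast
lemma connect: "\<exists>m n. (pred ^^ m) v = (pred ^^ n) w" using tree unfolding homtree_def by blast

definition tdist :: "'v \<Rightarrow> nat" where
  "tdist v = (LEAST k. \<exists>m n. m + n = k \<and> (pred ^^ m) v = (pred ^^ n) undefined)"

lemma tdist_ex: "\<exists>m n. m + n = tdist v \<and> (pred ^^ m) v = (pred ^^ n) undefined"
proof -
  obtain m n where "(pred ^^ m) v = (pred ^^ n) undefined" using connect by blast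
  hence "\<exists>k m n. m + n = k \<and> (pred ^^ m) v = (pred ^^ n) undefined" by blast
  thus ?thesis unfolding tdist_def by (rule LeastI_ex)
qed

lemma tdist_le: "(pred ^^ m) v = (pred ^^ n) undefined \<Longrightarrow> tdist v \<le> m + n"
  unfolding tdist_def by (rule Least_le) blast

lemma tdist_pred1: "tdist (pred v) \<le> tdist v + 1"
proof -
  obtain m n where mn: "m + n = tdist v" "(pred ^^ m) v = (pred ^^ n) undefined" using tdist_ex by blast
  show ?thesis
  proof (cases m)
    case 0
    hence "(pred ^^ 0) (pred v) = (pred ^^ Suc n) undefined" using mn by simp
    hence "tdist (pred v) \<le> 0 + Suc n" by (rule tdist_le)
    thus ?thesis using mn 0 by simp
  next
    case (Suc k)
    hence "(pred ^^ k) (pred v) = (pred ^^ n) undefined" using mn by (simp add: funpow_Suc_right del: funpow.simps)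
    hence "tdist (pred v) \<le> k + n" by (rule tdist_le)
    thus ?thesis using mn Suc by simp
  qed
qed

lemma tdist_pred2: "tdist v \<le> tdist (pred v) + 1"
proof -
  obtain m n where mn: "m + n = tdist (pred v)" "(pred ^^ m) (pred v) = (pred ^^ n) undefined" using tdist_ex by blast
  hence "(pred ^^ Suc m) v = (pred ^^ n) undefined" by (simp add: funpow_Suc_right del: funpow.simps)
  hence "tdist v \<le> Suc m + n" by (rule tdist_le)
  thus ?thesis using mn by simp
qed

lemma fin_pre: "finite {v. (pred ^^ m) v = w}"
proof (induction m arbitrary: w)
  case 0 thus ?case by simp
next
  case (Suc m)
  have "{v. (pred ^^ Suc m) v = w} = (\<Union>u\<in>{u. (pred ^^ m) u = w}. {v. pred v = u})"
    by (auto simp: funpow_Suc_right simp del: funpow.simps)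
  thus ?case using Suc children_fin by simp
qed

lemma tdist_fin: "finite {v. tdist v < N}"
proof -
  have "{v. tdist v < N} \<subseteq> (\<Union>m<N. \<Union>n<N. {v. (pred ^^ m) v = (pred ^^ n) undefined})"
  proof
    fix v assume "v \<in> {v. tdist v < N}"
    moreover obtain m n where "m + n = tdist v" "(pred ^^ m) v = (pred ^^ n) undefined" using tdist_ex by blast
    ultimately show "v \<in> (\<Union>m<N. \<Union>n<N. {v. (pred ^^ m) v = (pred ^^ n) undefined})"
      by (simp add: bexI[where x=m] bexI[where x=n])
  qed
  thus ?thesis by (rule finite_subset) (auto intro: fin_pre)
qed

definition cc :: "'v \<Rightarrow> real" where "cc v = 1 + real (tdist v)"

lemma cc_ge1: "cc v \<ge> 1" by (simp add: cc_def)
lemma cc_diff: "\<bar>cc v - cc (pred v)\<bar> \<le> 1"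
  using tdist_pred1[of v] tdist_pred2[of v] by (simp add: cc_def)

definition sv :: "'v \<Rightarrow> real" where "sv v = q powr (real_of_int (h v) - 1)"

lemma sv_pos: "sv v > 0" using q1 by (simp add: sv_def)
lemma sv_top: "q powr (real_of_int (h v)) = q * sv v"
  using q1 by (simp add: sv_def powr_diff)
lemma sv_pred: "sv (pred v) * q = sv v"
  using q1 by (simp add: sv_def hpred powr_diff power2_eq_square field_simps)

definition t0 :: real where "t0 = 1 + (q - 1) / 3"
definition t1 :: real where "t1 = 1 + 2 * (q - 1) / 3"
definition chi :: "real \<Rightarrow> real" where "chi t = chi0 ((3 / (q - 1)) * t + (- 3 / (q - 1) - 1))"

lemma chi_step: "step chi t0 t1"
  unfolding chi_def t0_def t1_def by (rule step_chi[OF q1])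

lemma t01: "1 < t0" "t0 \<le> t1" "t1 < q" using q1 by (auto simp: t0_def t1_def field_simps)

lemma chi1: "chi 1 = 0" using step.lo[OF chi_step] t01 by simp
lemma chiq: "chi q = 1" using step.hi[OF chi_step] t01 by simp

definition A :: "'v \<Rightarrow> real \<Rightarrow> real" where "A v x = cc (pred v) + H (x / sv v)"
definition D :: "'v \<Rightarrow> real \<Rightarrow> real" where
  "D v x = cc v - cc (pred v) + H (x / (sv v * q)) - H (x / sv v)"
definition X :: "'v \<Rightarrow> real \<Rightarrow> real" where "X v y = chi (y / sv v)"

definition rho :: "(real \<times> real) \<times> 'v \<Rightarrow> real" where
  "rho P = A (snd P) (fst (fst P)) + D (snd P) (fst (fst P)) * X (snd P) (snd (fst P))"

lemma rho_v: "(\<lambda>z. rho (z, v)) = (\<lambda>z. A v (fst z) + D v (fst z) * X v (snd z))"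
  by (simp add: rho_def)

lemma sm_A: "sm (A v)"
proof -
  have "sm (\<lambda>x. cc (pred v) + H (x / sv v))" by (rule sm_add[OF sm_const sm_scale[OF sm_H]])
  thus ?thesis by (simp add: A_def[abs_def])
qed

lemma sm_D: "sm (D v)"
proof -
  have "sm (\<lambda>x. (cc v - cc (pred v) + H (x / (sv v * q))) - H (x / sv v))"
    by (rule sm_diff2[OF sm_add[OF sm_const sm_scale[OF sm_H]] sm_scale[OF sm_H]])
  thus ?thesis by (simp add: D_def[abs_def])
qed

lemma sm_X: "sm (X v)"
proof -
  have "sm (\<lambda>y. chi (y / sv v))" by (rule sm_scale[OF step.sm[OF chi_step]])
  thus ?thesis by (simp add: X_def[abs_def])
qed

lemma rho_W: "(\<lambda>z. rho (z, v)) \<in> W"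
proof -
  have "(\<lambda>z. (\<lambda>z. A v (fst z) * (\<lambda>_. 1) (snd z)) z + (\<lambda>z. D v (fst z) * X v (snd z)) z) \<in> W"
    by (rule W.W_add[OF W.W_prod[OF sm_A sm_const] W.W_prod[OF sm_D sm_X]])
  thus ?thesis unfolding rho_v by simp
qed


lemma DS: "sm g \<Longrightarrow> ((\<lambda>x. g (x / c)) has_real_derivative deriv g (x / c) / c) (at x)"
  using sm_DERIV[OF sm_scale, of g c x] deriv_scale[of g c] by simp

lemma G1: assumes g: "sm g" shows "deriv (\<lambda>x. k + g (x / c)) = (\<lambda>x. deriv g (x / c) / c)"
proof
  fix x
  show "deriv (\<lambda>x. k + g (x / c)) x = deriv g (x / c) / c"
    using DERIV_add[OF DERIV_const[of k] DS[OF g, of c x]] by (intro DERIV_imp_deriv) simp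
qed

lemma G1': "sm g \<Longrightarrow> deriv (\<lambda>x. deriv g (x / c) / c) = (\<lambda>x. deriv (deriv g) (x / c) / c / c)"
  by (rule ext, rule DERIV_imp_deriv, rule DERIV_cdivide, rule DS, rule sm_deriv)

lemma G2: assumes g: "sm g" shows "deriv (\<lambda>x. k + g (x / c1) - g (x / c2)) = (\<lambda>x. deriv g (x / c1) / c1 - deriv g (x / c2) / c2)"
proof
  fix x
  show "deriv (\<lambda>x. k + g (x / c1) - g (x / c2)) x = deriv g (x / c1) / c1 - deriv g (x / c2) / c2"
    using DERIV_diff[OF DERIV_add[OF DERIV_const[of k] DS[OF g, of c1 x]] DS[OF g, of c2 x]] by (intro DERIV_imp_deriv) simp
qed

lemma G2': "sm g \<Longrightarrow> deriv (\<lambda>x. deriv g (x / c1) / c1 - deriv g (x / c2) / c2)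
   = (\<lambda>x. deriv (deriv g) (x / c1) / c1 / c1 - deriv (deriv g) (x / c2) / c2 / c2)"
  by (rule ext, rule DERIV_imp_deriv, intro DERIV_diff DERIV_cdivide DS sm_deriv)

lemma dA: "deriv (A v) = (\<lambda>x. deriv H (x / sv v) / sv v)"
  using G1[OF sm_H, of "cc (pred v)" "sv v"] by (simp add: A_def[abs_def])
lemma ddA: "deriv (deriv (A v)) = (\<lambda>x. deriv (deriv H) (x / sv v) / sv v / sv v)"
  unfolding dA by (rule G1'[OF sm_H])
lemma dD: "deriv (D v) = (\<lambda>x. deriv H (x / (sv v * q)) / (sv v * q) - deriv H (x / sv v) / sv v)"
  using G2[OF sm_H, of "cc v - cc (pred v)" "sv v * q" "sv v"] by (simp add: D_def[abs_def])
lemma ddD: "deriv (deriv (D v)) = (\<lambda>x. deriv (deriv H) (x / (sv v * q)) / (sv v * q) / (sv v * q)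
     - deriv (deriv H) (x / sv v) / sv v / sv v)"
  unfolding dD by (rule G2'[OF sm_H])
lemma dX: "deriv (X v) = (\<lambda>y. deriv chi (y / sv v) / sv v)"
  using deriv_scale[OF step.sm[OF chi_step], of "sv v"] by (simp add: X_def[abs_def])
lemma ddX: "deriv (deriv (X v)) = (\<lambda>y. deriv (deriv chi) (y / sv v) / sv v / sv v)"
  using deriv2_scale[OF step.sm[OF chi_step], of "sv v"] by (simp add: X_def[abs_def])

lemma pdx_rho: "pdx (\<lambda>z. rho (z, v)) (x, y) = deriv (A v) x + deriv (D v) x * X v y"
  unfolding rho_v pdx_form[OF sm_A sm_D] by simp
lemma pdy_rho: "pdy (\<lambda>z. rho (z, v)) (x, y) = D v x * deriv (X v) y"
  unfolding rho_v pdy_form[OF sm_X] by simp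
lemma pdxx_rho: "pdx (pdx (\<lambda>z. rho (z, v))) (x, y) = deriv (deriv (A v)) x + deriv (deriv (D v)) x * X v y"
  unfolding rho_v pdx_form[OF sm_A sm_D] pdx_form[OF sm_deriv[OF sm_A] sm_deriv[OF sm_D]] by simp
lemma pdyy_rho: "pdy (pdy (\<lambda>z. rho (z, v))) (x, y) = D v x * deriv (deriv (X v)) y"
  unfolding rho_v pdy_form[OF sm_X] pdy_form2[OF sm_deriv[OF sm_X]] by simp


lemma so_iff: "(x, y) \<in> strip_open q h v \<longleftrightarrow> sv v < y \<and> y < q * sv v"
  unfolding strip_open_def sv_top sv_def[symmetric] by simp

lemma D_bound: "\<bar>D v x\<bar> \<le> 1 + 2 * ln q"
proof -
  have e: "x / sv v / q = x / (sv v * q)" by simp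
  have "0 \<le> H (x / sv v) - H (x / (sv v * q)) \<and> H (x / sv v) - H (x / (sv v * q)) \<le> 2 * ln q"
    using H_scale[of q "x / sv v"] q1 unfolding e by simp
  thus ?thesis using cc_diff[of v] unfolding D_def by linarith
qed

lemma lnq: "ln q \<ge> 0" using q1 by simp

lemma bx: "(x, y) \<in> strip_open q h v \<Longrightarrow> \<bar>y * pdx (\<lambda>z. rho (z, v)) (x, y)\<bar> \<le> q * 1"
proof -
  assume "(x, y) \<in> strip_open q h v"
  hence y: "sv v < y" "y < q * sv v" by (auto simp: so_iff)
  have "\<bar>y * (deriv H (x / sv v) / sv v + (deriv H (x / (sv v * q)) / (sv v * q) - deriv H (x / sv v) / sv v) * chi (y / sv v))\<bar> \<le> q * 1"
    using step.rng[OF chi_step, of "y / sv v"] q1 sv_pos[of v] y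
    by (intro AB1 H_d1_bound) (auto simp: mult.commute)
  thus ?thesis unfolding pdx_rho dA dD X_def .
qed

lemma bxx: "(x, y) \<in> strip_open q h v \<Longrightarrow> \<bar>y\<^sup>2 * pdx (pdx (\<lambda>z. rho (z, v))) (x, y)\<bar> \<le> q\<^sup>2 * 2"
proof -
  assume "(x, y) \<in> strip_open q h v"
  hence y: "sv v < y" "y < q * sv v" by (auto simp: so_iff)
  have s: "sv v > 0" by (rule sv_pos)
  have yy: "y\<^sup>2 \<le> q\<^sup>2 * (sv v * sv v)"
  proof -
    have "y\<^sup>2 \<le> (q * sv v)\<^sup>2" using y s by (intro power_mono) auto
    thus ?thesis by (simp add: power2_eq_square mult_ac)
  qed
  have q2: "q * q \<ge> 1" using q1 by (metis less_imp_le mult_le_cancel_left1 mult.commute order_trans less_eq_real_def one_le_power power2_eq_square)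
  have "\<bar>y\<^sup>2 * (deriv (deriv H) (x / sv v) / (sv v * sv v) + (deriv (deriv H) (x / (sv v * q)) / ((sv v * sv v) * (q * q)) - deriv (deriv H) (x / sv v) / (sv v * sv v)) * chi (y / sv v))\<bar> \<le> q\<^sup>2 * 2"
    using step.rng[OF chi_step, of "y / sv v"] q2 s yy
    by (intro AB1 H_d2_bound) auto
  moreover have "deriv (deriv H) (x / (sv v * q)) / ((sv v * sv v) * (q * q)) = deriv (deriv H) (x / (sv v * q)) / (sv v * q) / (sv v * q)"
    by (simp add: mult_ac)
  ultimately show ?thesis unfolding pdxx_rho ddA ddD X_def by (simp add: mult_ac)
qed

lemma by1: "(x, y) \<in> strip_open q h v \<Longrightarrow> \<forall>t. \<bar>deriv chi t\<bar> \<le> K \<Longrightarrow>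
    \<bar>y * pdy (\<lambda>z. rho (z, v)) (x, y)\<bar> \<le> q * ((1 + 2 * ln q) * K)"
proof -
  assume "(x, y) \<in> strip_open q h v" and K: "\<forall>t. \<bar>deriv chi t\<bar> \<le> K"
  hence y: "sv v < y" "y < q * sv v" by (auto simp: so_iff)
  have "\<bar>y * (D v x * (deriv chi (y / sv v) / sv v))\<bar> \<le> q * ((1 + 2 * ln q) * K)"
    using y sv_pos[of v] K by (intro AB2 D_bound) auto
  thus ?thesis unfolding pdy_rho dX .
qed

lemma byy: "(x, y) \<in> strip_open q h v \<Longrightarrow> \<forall>t. \<bar>deriv (deriv chi) t\<bar> \<le> K \<Longrightarrow>
    \<bar>y\<^sup>2 * pdy (pdy (\<lambda>z. rho (z, v))) (x, y)\<bar> \<le> q\<^sup>2 * ((1 + 2 * ln q) * K)"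
proof -
  assume "(x, y) \<in> strip_open q h v" and K: "\<forall>t. \<bar>deriv (deriv chi) t\<bar> \<le> K"
  hence y: "sv v < y" "y < q * sv v" by (auto simp: so_iff)
  have s: "sv v > 0" by (rule sv_pos)
  have yy: "y\<^sup>2 \<le> q\<^sup>2 * (sv v * sv v)"
  proof -
    have "y\<^sup>2 \<le> (q * sv v)\<^sup>2" using y s by (intro power_mono) auto
    thus ?thesis by (simp add: power2_eq_square mult_ac)
  qed
  have "\<bar>y\<^sup>2 * (D v x * (deriv (deriv chi) (y / sv v) / (sv v * sv v)))\<bar> \<le> q\<^sup>2 * ((1 + 2 * ln q) * K)"
    using yy s K by (intro AB2 D_bound) auto
  thus ?thesis unfolding pdyy_rho ddX by simp
qed

lemma pdy_zero:
  assumes "(x, y) \<in> strip_open q h v" "y < sv v * t0 \<or> sv v * t1 < y"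
  shows "pdy (\<lambda>z. rho (z, v)) (x, y) = 0"
proof -
  have s: "sv v > 0" by (rule sv_pos)
  have "y / sv v < t0 \<or> t1 < y / sv v" using assms(2) s by (auto simp: field_simps)
  hence "deriv chi (y / sv v) = 0" by (rule step.d_zero[OF chi_step])
  thus ?thesis unfolding pdy_rho dX by simp
qed


definition HTP :: "((real \<times> real) \<times> 'v) set \<Rightarrow> bool" where
  "HTP U \<longleftrightarrow> U \<subseteq> HT_set q h \<and>
     (\<forall>v. openin (top_of_set (strip q h v)) {z \<in> strip q h v. HT_proj q h pred (z, v) \<in> U})"

lemma istop: "istopology HTP"
  unfolding istopology_def
proof (intro conjI allI impI)
  fix S T assume "HTP S" "HTP T"
  thus "HTP (S \<inter> T)" unfolding HTP_def
  proof (intro conjI allI)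
    fix v
    assume a: "S \<subseteq> HT_set q h \<and> (\<forall>v. openin (top_of_set (strip q h v)) {z \<in> strip q h v. HT_proj q h pred (z, v) \<in> S})"
      "T \<subseteq> HT_set q h \<and> (\<forall>v. openin (top_of_set (strip q h v)) {z \<in> strip q h v. HT_proj q h pred (z, v) \<in> T})"
    have "{z \<in> strip q h v. HT_proj q h pred (z, v) \<in> S \<inter> T} =
       {z \<in> strip q h v. HT_proj q h pred (z, v) \<in> S} \<inter> {z \<in> strip q h v. HT_proj q h pred (z, v) \<in> T}" by auto
    thus "openin (top_of_set (strip q h v)) {z \<in> strip q h v. HT_proj q h pred (z, v) \<in> S \<inter> T}"
      using a by (simp add: openin_Int)
    show "S \<inter> T \<subseteq> HT_set q h" using a by auto
  qed
next
  fix K assume a: "\<forall>U\<in>K. HTP U"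
  show "HTP (\<Union>K)" unfolding HTP_def
  proof (intro conjI allI)
    show "\<Union>K \<subseteq> HT_set q h" using a by (auto simp: HTP_def)
    fix v
    have "{z \<in> strip q h v. HT_proj q h pred (z, v) \<in> \<Union>K} =
       \<Union>((\<lambda>U. {z \<in> strip q h v. HT_proj q h pred (z, v) \<in> U}) ` K)" by auto
    moreover have "openin (top_of_set (strip q h v)) (\<Union>((\<lambda>U. {z \<in> strip q h v. HT_proj q h pred (z, v) \<in> U}) ` K))"
      using a by (intro openin_Union) (auto simp: HTP_def)
    ultimately show "openin (top_of_set (strip q h v)) {z \<in> strip q h v. HT_proj q h pred (z, v) \<in> \<Union>K}" by simp
  qed
qed

lemma openin_HT: "openin (HT_top q h pred) = HTP"
  unfolding HT_top_def HTP_def[abs_def, symmetric] using istop by simp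

lemma HT_mem: "((x, y), v) \<in> HT_set q h \<longleftrightarrow> sv v < y \<and> y \<le> q * sv v"
  unfolding HT_set_def sv_top sv_def[symmetric] by simp

lemma strip_mem: "(x, y) \<in> strip q h v \<longleftrightarrow> sv v \<le> y \<and> y \<le> q * sv v"
  unfolding strip_def sv_top sv_def[symmetric] by simp

lemma proj_eq: "HT_proj q h pred ((x, y), v) = (if y = sv v then ((x, y), pred v) else ((x, y), v))"
  by (simp add: HT_proj_def sv_def)

lemma sv_lt: "sv (pred v) < sv v"
proof -
  have "sv (pred v) * 1 < sv (pred v) * q" using q1 sv_pos[of "pred v"] by (intro mult_strict_left_mono) auto
  thus ?thesis using sv_pred[of v] by simp
qed

lemma proj_in: "z \<in> strip q h v \<Longrightarrow> HT_proj q h pred (z, v) \<in> HT_set q h"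
proof -
  assume z: "z \<in> strip q h v"
  obtain x y where xy: "z = (x, y)" by fastforce
  show ?thesis
  proof (cases "y = sv v")
    case True thus ?thesis using sv_lt[of v] sv_pred[of v] by (simp add: xy proj_eq HT_mem mult.commute)
  next
    case False thus ?thesis using z by (auto simp: xy proj_eq HT_mem strip_mem)
  qed
qed

lemma topspace_HT: "topspace (HT_top q h pred) = HT_set q h"
proof -
  have "HTP (HT_set q h)" unfolding HTP_def
  proof (intro conjI allI)
    fix v
    have "{z \<in> strip q h v. HT_proj q h pred (z, v) \<in> HT_set q h} = topspace (top_of_set (strip q h v))"
      using proj_in by auto
    thus "openin (top_of_set (strip q h v)) {z \<in> strip q h v. HT_proj q h pred (z, v) \<in> HT_set q h}"
      by (simp only: openin_topspace)
  qed simp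
  thus ?thesis unfolding topspace_def openin_HT by (auto simp: HTP_def)
qed

lemma rho_proj: "rho (HT_proj q h pred (z, v)) = rho (z, v)"
proof -
  obtain x y where xy: "z = (x, y)" by fastforce
  show ?thesis
  proof (cases "y = sv v")
    case True
    have e1: "sv v / sv (pred v) = q" using sv_pred[of v] sv_pos[of "pred v"] by (simp add: field_simps)
    have e3: "sv (pred v) * q = sv v" by (rule sv_pred)
    have ne: "sv v \<noteq> 0" using sv_pos[of v] by simp
    show ?thesis using True ne by (simp add: xy proj_eq rho_def X_def e1 chiq chi1 A_def D_def e3)
  next
    case False thus ?thesis by (simp add: xy proj_eq)
  qed
qed

lemma rho_cont: "continuous_map (HT_top q h pred) euclideanreal rho"
  unfolding continuous_map_def topspace_HT
proof (intro conjI allI impI)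
  show "rho \<in> HT_set q h \<rightarrow> topspace euclideanreal" by simp
  fix U assume "openin euclideanreal U"
  hence U: "open U" by simp
  show "openin (HT_top q h pred) {x \<in> HT_set q h. rho x \<in> U}" unfolding openin_HT HTP_def
  proof (intro conjI allI)
    fix v
    have "{z \<in> strip q h v. HT_proj q h pred (z, v) \<in> {x \<in> HT_set q h. rho x \<in> U}} = strip q h v \<inter> (\<lambda>z. rho (z, v)) -` U"
      using proj_in rho_proj by auto
    moreover have "continuous_on (strip q h v) (\<lambda>z. rho (z, v))"
      using W_props[OF rho_W[of v]] continuous_on_subset by blast
    ultimately show "openin (top_of_set (strip q h v)) {z \<in> strip q h v. HT_proj q h pred (z, v) \<in> {x \<in> HT_set q h. rho x \<in> U}}"
      using continuous_openin_preimage_gen U by metis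
  qed auto
qed

lemma proj_cont: "continuous_map (top_of_set (strip q h v)) (HT_top q h pred) (\<lambda>z. HT_proj q h pred (z, v))"
  unfolding continuous_map_def topspace_HT
proof (intro conjI allI impI)
  show "(\<lambda>z. HT_proj q h pred (z, v)) \<in> topspace (top_of_set (strip q h v)) \<rightarrow> HT_set q h"
    using proj_in by auto
  fix U assume "openin (HT_top q h pred) U"
  hence "HTP U" by (simp add: openin_HT)
  thus "openin (top_of_set (strip q h v)) {x \<in> topspace (top_of_set (strip q h v)). HT_proj q h pred (x, v) \<in> U}"
    by (simp add: HTP_def)
qed

lemma rho_lower: "y \<in> {sv v..q * sv v} \<Longrightarrow> rho ((x, y), v) \<ge> min (cc (pred v)) (cc v) + H (x / (sv v * q))"
proof -
  assume "y \<in> {sv v..q * sv v}"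
  define c where "c = X v y"
  have c: "0 \<le> c" "c \<le> 1" using step.rng[OF chi_step] by (auto simp: c_def X_def)
  have hm: "H (x / (sv v * q)) \<le> H (x / sv v)"
  proof (rule H_mono)
    have "\<bar>x\<bar> / (sv v * q) \<le> \<bar>x\<bar> / sv v"
      using sv_pos[of v] q1 by (intro divide_left_mono) (auto simp: mult_le_cancel_left1)
    thus "\<bar>x / (sv v * q)\<bar> \<le> \<bar>x / sv v\<bar>" using sv_pos[of v] q1 by (simp add: abs_div)
  qed
  define m where "m = min (cc (pred v)) (cc v) + H (x / (sv v * q))"
  have a: "m \<le> A v x" using hm by (simp add: m_def A_def)
  have b: "m \<le> A v x + D v x" by (simp add: m_def A_def D_def)
  have "rho ((x, y), v) = (1 - c) * A v x + c * (A v x + D v x)" by (simp add: rho_def c_def algebra_simps)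
  also have "\<dots> \<ge> (1 - c) * m + c * m" using a b c by (intro add_mono mult_left_mono) auto
  finally show ?thesis by (simp add: m_def algebra_simps)
qed

lemma rho_pos: "P \<in> HT_set q h \<Longrightarrow> rho P > 0"
proof -
  assume P: "P \<in> HT_set q h"
  obtain x y v where xy: "P = ((x, y), v)" by (metis prod.collapse)
  have "y \<in> {sv v..q * sv v}" using P by (auto simp: xy HT_mem)
  hence "rho P \<ge> min (cc (pred v)) (cc v) + H (x / (sv v * q))" using rho_lower xy by simp
  moreover have "min (cc (pred v)) (cc v) \<ge> 1" using cc_ge1 by simp
  ultimately show ?thesis using H_nonneg[of "x / (sv v * q)"] by linarith
qed

lemma exhaust: "\<exists>K. compactin (HT_top q h pred) K \<and> (\<forall>P \<in> HT_set q h. P \<notin> K \<longrightarrow> rho P \<ge> M)"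
proof -
  define N where "N = nat \<lceil>M\<rceil> + 1"
  define R where "R v = exp M * (sv v * q)" for v
  define Kv where "Kv v = (\<lambda>z. HT_proj q h pred (z, v)) ` ({- R v..R v} \<times> {sv v..q * sv v})" for v
  define K where "K = \<Union>(Kv ` {v. tdist v < N})"
  have "compactin (HT_top q h pred) K" unfolding K_def
  proof (rule compactin_Union)
    show "finite (Kv ` {v. tdist v < N})" using tdist_fin by simp
    fix S assume "S \<in> Kv ` {v. tdist v < N}"
    then obtain v where S: "S = Kv v" by blast
    have "compactin (top_of_set (strip q h v)) ({- R v..R v} \<times> {sv v..q * sv v})"
      unfolding compactin_subtopology compactin_euclidean_iff
      by (auto simp: compact_Times strip_mem)
    thus "compactin (HT_top q h pred) S" unfolding S Kv_def by (rule image_compactin[OF _ proj_cont])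
  qed
  moreover have "rho P \<ge> M" if P: "P \<in> HT_set q h" "P \<notin> K" for P
  proof -
    obtain x y v where xy: "P = ((x, y), v)" by (metis prod.collapse)
    have y: "sv v < y" "y \<le> q * sv v" using P by (auto simp: xy HT_mem)
    hence low: "rho P \<ge> min (cc (pred v)) (cc v) + H (x / (sv v * q))" using rho_lower xy by simp
    have NM: "real N \<ge> M + 1" unfolding N_def by linarith
    show ?thesis
    proof (cases "tdist v < N")
      case False
      hence "cc v \<ge> M" "cc (pred v) \<ge> M" using tdist_pred2[of v] NM by (auto simp: cc_def)
      thus ?thesis using low H_nonneg[of "x / (sv v * q)"] by linarith
    next
      case True
      have "P \<notin> Kv v" using P(2) True by (auto simp: K_def)
      moreover have "P = HT_proj q h pred ((x, y), v)" using y by (simp add: xy proj_eq)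
      ultimately have "(x, y) \<notin> {- R v..R v} \<times> {sv v..q * sv v}" unfolding Kv_def by blast
      hence xR: "\<bar>x\<bar> > R v" using y by auto
      have "H (x / (sv v * q)) \<ge> M"
      proof (rule ccontr)
        assume "\<not> M \<le> H (x / (sv v * q))"
        hence "H (x / (sv v * q)) < M" by simp
        hence "\<bar>x / (sv v * q)\<bar> < exp M" by (rule H_large)
        hence "\<bar>x\<bar> < exp M * (sv v * q)" using sv_pos[of v] q1 by (simp add: abs_div divide_less_eq)
        thus False using xR by (simp add: R_def)
      qed
      moreover have "min (cc (pred v)) (cc v) \<ge> 1" using cc_ge1 by simp
      ultimately show ?thesis using low by linarith
    qed
  qed
  ultimately show ?thesis by blast
qed

lemma smooth_rho: "strip_smooth (strip_open q h v) (\<lambda>z. rho (z, v))"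
proof (rule strip_smooth_W[OF rho_W])
  fix R
  have "strip_open q h v \<inter> {(x, y). \<bar>x\<bar> \<le> R} \<subseteq> {-R..R} \<times> {sv v..q * sv v}"
    by (auto simp: so_iff)
  moreover have "bounded ({-R..R} \<times> {sv v..q * sv v})" by (intro bounded_Times) auto
  ultimately show "bounded (strip_open q h v \<inter> {(x, y). \<bar>x\<bar> \<le> R})" by (rule bounded_subset[rotated])
qed


lemma main: "\<exists>\<rho> :: (real \<times> real) \<times> 'v \<Rightarrow> real.
    continuous_map (HT_top q h pred) euclideanreal \<rho> \<and>
    (\<forall>P \<in> HT_set q h. \<rho> P > 0) \<and>
    (\<forall>v. strip_smooth (strip_open q h v) (\<lambda>z. \<rho> (z, v))) \<and>
    (\<forall>v x. \<exists>a b. q powr (real_of_int (h v) - 1) < a \<and> a \<le> b \<and> b < q powr (real_of_int (h v)) \<and>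
        (\<forall>y. q powr (real_of_int (h v) - 1) < y \<and> y < q powr (real_of_int (h v)) \<and> (y < a \<or> b < y)
             \<longrightarrow> pdy (\<lambda>z. \<rho> (z, v)) (x, y) = 0)) \<and>
    (\<forall>M. \<exists>K. compactin (HT_top q h pred) K \<and> (\<forall>P \<in> HT_set q h. P \<notin> K \<longrightarrow> \<rho> P \<ge> M)) \<and>
    (\<exists>B. \<forall>v x y. (x, y) \<in> strip_open q h v \<longrightarrow>
        y * sqrt ((pdx (\<lambda>z. \<rho> (z, v)) (x, y))\<^sup>2 + (pdy (\<lambda>z. \<rho> (z, v)) (x, y))\<^sup>2) \<le> B) \<and>
    (\<exists>B. \<forall>v x y. (x, y) \<in> strip_open q h v \<longrightarrow>
        \<bar>y\<^sup>2 * (pdx (pdx (\<lambda>z. \<rho> (z, v))) (x, y) + pdy (pdy (\<lambda>z. \<rho> (z, v))) (x, y))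
          + \<alpha> * y * pdy (\<lambda>z. \<rho> (z, v)) (x, y)\<bar> \<le> B)"
proof (rule exI[of _ rho], intro conjI allI)
  obtain K1 where K1: "\<forall>t. \<bar>deriv chi t\<bar> \<le> K1" using step.d_bound[OF chi_step] by blast
  obtain K2 where K2: "\<forall>t. \<bar>deriv (deriv chi) t\<bar> \<le> K2" using step.dd_bound[OF chi_step] by blast
  show "continuous_map (HT_top q h pred) euclideanreal rho" by (rule rho_cont)
  show "\<forall>P\<in>HT_set q h. 0 < rho P" using rho_pos by blast
  show "strip_smooth (strip_open q h v) (\<lambda>z. rho (z, v))" for v by (rule smooth_rho)
  show "\<exists>K. compactin (HT_top q h pred) K \<and> (\<forall>P\<in>HT_set q h. P \<notin> K \<longrightarrow> M \<le> rho P)" for M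
    by (rule exhaust)
  fix v x
  show "\<exists>a b. q powr (real_of_int (h v) - 1) < a \<and> a \<le> b \<and> b < q powr real_of_int (h v) \<and>
        (\<forall>y. q powr (real_of_int (h v) - 1) < y \<and> y < q powr real_of_int (h v) \<and> (y < a \<or> b < y) \<longrightarrow>
             pdy (\<lambda>z. rho (z, v)) (x, y) = 0)"
  proof (intro exI conjI allI impI)
    have s: "sv v > 0" by (rule sv_pos)
    show "q powr (real_of_int (h v) - 1) < sv v * t0" unfolding sv_def[symmetric] using s t01 by simp
    show "sv v * t0 \<le> sv v * t1" using s t01 by simp
    show "sv v * t1 < q powr real_of_int (h v)" unfolding sv_top using s t01 by (simp add: mult.commute)
    fix y assume "q powr (real_of_int (h v) - 1) < y \<and> y < q powr real_of_int (h v) \<and> (y < sv v * t0 \<or> sv v * t1 < y)"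
    thus "pdy (\<lambda>z. rho (z, v)) (x, y) = 0"
      by (intro pdy_zero) (auto simp: strip_open_def)
  qed
next
  obtain K1 where K1: "\<forall>t. \<bar>deriv chi t\<bar> \<le> K1" using step.d_bound[OF chi_step] by blast
  show "\<exists>B. \<forall>v x y. (x, y) \<in> strip_open q h v \<longrightarrow>
        y * sqrt ((pdx (\<lambda>z. rho (z, v)) (x, y))\<^sup>2 + (pdy (\<lambda>z. rho (z, v)) (x, y))\<^sup>2) \<le> B"
  proof (intro exI allI impI)
    fix v x y assume xy: "(x, y) \<in> strip_open q h v"
    have y0: "y > 0" using xy sv_pos[of v] by (auto simp: so_iff)
    let ?a = "pdx (\<lambda>z. rho (z, v)) (x, y)" and ?b = "pdy (\<lambda>z. rho (z, v)) (x, y)"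
    have "y * sqrt (?a\<^sup>2 + ?b\<^sup>2) \<le> y * (\<bar>?a\<bar> + \<bar>?b\<bar>)" using y0 sqrt_le_abs by (intro mult_left_mono) auto
    also have "\<dots> = \<bar>y * ?a\<bar> + \<bar>y * ?b\<bar>" using y0 by (simp add: abs_mult algebra_simps)
    also have "\<dots> \<le> q * 1 + q * ((1 + 2 * ln q) * K1)" using bx[OF xy] by1[OF xy K1] by (intro add_mono)
    finally show "y * sqrt (?a\<^sup>2 + ?b\<^sup>2) \<le> q * 1 + q * ((1 + 2 * ln q) * K1)" .
  qed
next
  obtain K1 where K1: "\<forall>t. \<bar>deriv chi t\<bar> \<le> K1" using step.d_bound[OF chi_step] by blast
  obtain K2 where K2: "\<forall>t. \<bar>deriv (deriv chi) t\<bar> \<le> K2" using step.dd_bound[OF chi_step] by blast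
  show "\<exists>B. \<forall>v x y. (x, y) \<in> strip_open q h v \<longrightarrow>
        \<bar>y\<^sup>2 * (pdx (pdx (\<lambda>z. rho (z, v))) (x, y) + pdy (pdy (\<lambda>z. rho (z, v))) (x, y))
          + \<alpha> * y * pdy (\<lambda>z. rho (z, v)) (x, y)\<bar> \<le> B"
  proof (intro exI allI impI)
    fix v x y assume xy: "(x, y) \<in> strip_open q h v"
    let ?a = "pdx (pdx (\<lambda>z. rho (z, v))) (x, y)" and ?b = "pdy (pdy (\<lambda>z. rho (z, v))) (x, y)"
      and ?c = "pdy (\<lambda>z. rho (z, v)) (x, y)"
    have "\<bar>y\<^sup>2 * (?a + ?b) + \<alpha> * y * ?c\<bar> \<le> \<bar>y\<^sup>2 * ?a\<bar> + \<bar>y\<^sup>2 * ?b\<bar> + \<bar>\<alpha>\<bar> * \<bar>y * ?c\<bar>"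
    proof -
      have "\<bar>y\<^sup>2 * (?a + ?b) + \<alpha> * y * ?c\<bar> = \<bar>y\<^sup>2 * ?a + y\<^sup>2 * ?b + \<alpha> * (y * ?c)\<bar>"
        by (simp add: algebra_simps)
      also have "\<dots> \<le> \<bar>y\<^sup>2 * ?a\<bar> + \<bar>y\<^sup>2 * ?b\<bar> + \<bar>\<alpha> * (y * ?c)\<bar>" by (rule abs3)
      finally show ?thesis by (simp add: abs_mult)
    qed
    also have "\<dots> \<le> q\<^sup>2 * 2 + q\<^sup>2 * ((1 + 2 * ln q) * K2) + \<bar>\<alpha>\<bar> * (q * ((1 + 2 * ln q) * K1))"
      using bxx[OF xy] byy[OF xy K2] by1[OF xy K1] by (intro add_mono mult_left_mono) auto
    finally show "\<bar>y\<^sup>2 * (?a + ?b) + \<alpha> * y * ?c\<bar> \<le> q\<^sup>2 * 2 + q\<^sup>2 * ((1 + 2 * ln q) * K2) + \<bar>\<alpha>\<bar> * (q * ((1 + 2 * ln q) * K1))" .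
  qed
qed

end

theorem proposition8p3:
  fixes p :: nat and q \<alpha> :: real and pred :: "'v \<Rightarrow> 'v" and h :: "'v \<Rightarrow> int"
  assumes "p \<ge> 1" and "q > 1" and "homtree p pred h"
  shows "\<exists>\<rho> :: (real \<times> real) \<times> 'v \<Rightarrow> real.
    continuous_map (HT_top q h pred) euclideanreal \<rho> \<and>
    (\<forall>P \<in> HT_set q h. \<rho> P > 0) \<and>
    (\<forall>v. strip_smooth (strip_open q h v) (\<lambda>z. \<rho> (z, v))) \<and>
    (\<forall>v x. \<exists>a b. q powr (real_of_int (h v) - 1) < a \<and> a \<le> b \<and> b < q powr (real_of_int (h v)) \<and>
        (\<forall>y. q powr (real_of_int (h v) - 1) < y \<and> y < q powr (real_of_int (h v)) \<and> (y < a \<or> b < y)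
             \<longrightarrow> pdy (\<lambda>z. \<rho> (z, v)) (x, y) = 0)) \<and>
    (\<forall>M. \<exists>K. compactin (HT_top q h pred) K \<and> (\<forall>P \<in> HT_set q h. P \<notin> K \<longrightarrow> \<rho> P \<ge> M)) \<and>
    (\<exists>B. \<forall>v x y. (x, y) \<in> strip_open q h v \<longrightarrow>
        y * sqrt ((pdx (\<lambda>z. \<rho> (z, v)) (x, y))\<^sup>2 + (pdy (\<lambda>z. \<rho> (z, v)) (x, y))\<^sup>2) \<le> B) \<and>
    (\<exists>B. \<forall>v x y. (x, y) \<in> strip_open q h v \<longrightarrow>
        \<bar>y\<^sup>2 * (pdx (pdx (\<lambda>z. \<rho> (z, v))) (x, y) + pdy (pdy (\<lambda>z. \<rho> (z, v))) (x, y))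
          + \<alpha> * y * pdy (\<lambda>z. \<rho> (z, v)) (x, y)\<bar> \<le> B)"
  by (rule ht.main[OF ht.intro[OF assms]])


end
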